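(* Let $H$ be a real Hilbert space, $n\ge1$, and let $x_1,\dots,x_{n+1}$ be elements of the closed unit ball of $H$ with $0\in\operatorname{Co}(\{x_i:1\le i\le n+1\})$. Then for each $1\le j\le n$ there exists $J\subseteq\{1,\dots,n+1\}$ with $|J|=j$ such that $$d\bigl(0,\operatorname{Co}(\{x_i:i\in J\})\bigr)\le\sqrt{\frac{n+1-j}{nj}}.$$
   Context: $\operatorname{Co}$ denotes convex hull and $d(x,S)=\inf_{s\in S}\|x-s\|$. *)

theory Defs
  imports "HOL-Analysis.Analysis"
begin

end

theory Submission
  imports Defs
begin

lemma hull_index_repr:
  fixes x :: "nat \<Rightarrow> 'a::real_vector"
  assumes "finite I" "p \<in> convex hull (x ` I)"
  shows "\<exists>u. (\<forall>i\<in>I. 0 \<le> u i) \<and> sum u I = 1 \<and> p = (\<Sum>i\<in>I. u i *\<^sub>R x i)"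
proof -
  let ?S = "{y. \<exists>u. (\<forall>i\<in>I. 0 \<le> u i) \<and> sum u I = 1 \<and> y = (\<Sum>i\<in>I. u i *\<^sub>R x i)}"
  have sub: "x ` I \<subseteq> ?S"
  proof
    fix y assume "y \<in> x ` I"
    then obtain k where k: "k \<in> I" "y = x k" by auto
    have e: "(\<Sum>i\<in>I. (if i = k then 1 else 0) *\<^sub>R x i) = (\<Sum>i\<in>I. if i = k then x i else 0)"
      by (rule sum.cong) auto
    show "y \<in> ?S"
      by (rule CollectI, rule exI[of _ "\<lambda>i. if i = k then 1 else 0"])
         (use k assms(1) e in \<open>auto simp: sum.delta'\<close>)
  qed
  have cvx: "convex ?S"
    unfolding convex_def
  proof (intro ballI allI impI)
    fix y z :: 'a and a b :: real
    assume y: "y \<in> ?S" and z: "z \<in> ?S" and ab: "0 \<le> a" "0 \<le> b" "a + b = 1"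
    from y obtain u where u: "\<forall>i\<in>I. 0 \<le> u i" "sum u I = 1" "y = (\<Sum>i\<in>I. u i *\<^sub>R x i)" by auto
    from z obtain v where v: "\<forall>i\<in>I. 0 \<le> v i" "sum v I = 1" "z = (\<Sum>i\<in>I. v i *\<^sub>R x i)" by auto
    show "a *\<^sub>R y + b *\<^sub>R z \<in> ?S"
    proof (rule CollectI, rule exI[of _ "\<lambda>i. a * u i + b * v i"], intro conjI)
      show "\<forall>i\<in>I. 0 \<le> a * u i + b * v i" using u v ab by auto
      show "(\<Sum>i\<in>I. a * u i + b * v i) = 1"
        using u v ab by (simp add: sum.distrib sum_distrib_left[symmetric])
      show "a *\<^sub>R y + b *\<^sub>R z = (\<Sum>i\<in>I. (a * u i + b * v i) *\<^sub>R x i)"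
        using u v by (simp add: scaleR_add_left sum.distrib scaleR_sum_right)
    qed
  qed
  have "convex hull (x ` I) \<subseteq> ?S" using hull_minimal[of "x ` I" ?S convex] sub cvx by blast
  then show ?thesis using assms(2) by blast
qed

lemma nearest_point:
  fixes C :: "'a::real_inner set"
  assumes "compact C" "C \<noteq> {}" "convex C"
  obtains p where "p \<in> C" "infdist 0 C = norm p" "\<And>y. y \<in> C \<Longrightarrow> norm p \<le> norm y"
    "\<And>y. y \<in> C \<Longrightarrow> inner p p \<le> inner p y"
proof -
  obtain p where p: "p \<in> C" "\<forall>y\<in>C. norm p \<le> norm y"
    using continuous_attains_inf[OF assms(1,2), of norm] continuous_on_norm_id by blast
  have "infdist 0 C = norm p"
  proof (rule antisym)
    show "infdist 0 C \<le> norm p" using infdist_le[OF p(1), of 0] by simp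
    show "norm p \<le> infdist 0 C"
      unfolding infdist_def using assms(2) p(2) by (auto intro!: cINF_greatest)
  qed
  moreover have "inner p p \<le> inner p y" if "y \<in> C" for y
  proof -
    have "inner (0 - p) (y - p) \<le> 0"
      by (rule any_closest_point_dot[OF assms(3) compact_imp_closed[OF assms(1)] p(1) that])
         (use p(2) in auto)
    then show ?thesis by (simp add: inner_diff_right)
  qed
  ultimately show ?thesis using that p by blast
qed

lemma step:
  fixes x :: "nat \<Rightarrow> 'a::real_inner"
  assumes fin: "finite I" and cI: "card I \<ge> 2" and nx: "\<forall>i\<in>I. norm (x i) \<le> 1"
  shows "\<exists>k\<in>I. (1 - 1 / (real (card I) - 1)^2) * (1 - (infdist 0 (convex hull (x ` I)))^2)
              \<le> 1 - (infdist 0 (convex hull (x ` (I - {k}))))^2"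
proof -
  let ?C = "convex hull (x ` I)"
  have Ine: "I \<noteq> {}" using cI by auto
  have cC: "compact ?C" by (rule finite_imp_compact_convex_hull) (use fin in auto)
  have neC: "?C \<noteq> {}" using Ine by simp
  obtain p where p: "p \<in> ?C" "infdist 0 ?C = norm p" "\<And>y. y \<in> ?C \<Longrightarrow> norm p \<le> norm y"
    "\<And>y. y \<in> ?C \<Longrightarrow> inner p p \<le> inner p y"
    using nearest_point[OF cC neC convex_convex_hull] by blast
  obtain u where u: "\<forall>i\<in>I. 0 \<le> u i" "sum u I = 1" "p = (\<Sum>i\<in>I. u i *\<^sub>R x i)"
    using hull_index_repr[OF fin p(1)] by blast
  define s where "s = real (card I)"
  have s2: "s \<ge> 2" using cI unfolding s_def by simp
  obtain k where k: "k \<in> I" "u k \<le> 1 / s"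
  proof (rule ccontr)
    assume "\<not> thesis"
    then have "\<forall>i\<in>I. 1 / s < u i" using that by force
    then have "(\<Sum>i\<in>I. 1 / s) < sum u I" by (intro sum_strict_mono[OF fin Ine]) auto
    then show False using u(2) s2 unfolding s_def by simp
  qed
  define l where "l = u k"
  have l0: "0 \<le> l" using u(1) k(1) l_def by auto
  have ls: "l * s \<le> 1" using k(2) s2 unfolding l_def by (simp add: field_simps)
  have "l * 2 \<le> l * s" using s2 l0 by (intro mult_left_mono) auto
  then have l1: "l < 1" using ls by linarith
  define r where "r = norm p"
  have xkC: "x k \<in> ?C" using k(1) by (simp add: hull_inc)
  have r1: "r \<le> 1" using p(3)[OF xkC] nx k(1) unfolding r_def by force
  have ip: "r^2 \<le> inner p (x k)" using p(4)[OF xkC] unfolding r_def by (simp add: power2_norm_eq_inner)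
  define q where "q = (\<Sum>i\<in>I - {k}. (u i / (1 - l)) *\<^sub>R x i)"
  have qC: "q \<in> convex hull (x ` (I - {k}))"
    unfolding q_def
  proof (rule convex_sum)
    show "convex (convex hull (x ` (I - {k})))" by simp
    show "finite (I - {k})" using fin by simp
    show "0 \<le> u i / (1 - l)" if "i \<in> I - {k}" for i using u(1) l1 that by auto
    have "sum u (I - {k}) = 1 - l" using u(2) sum.remove[OF fin k(1), of u] l_def by simp
    then show "(\<Sum>i\<in>I - {k}. u i / (1 - l)) = 1" using l1 by (simp add: sum_divide_distrib[symmetric])
    show "x i \<in> convex hull (x ` (I - {k}))" if "i \<in> I - {k}" for i using that by (simp add: hull_inc)
  qed
  have "(1 - l) *\<^sub>R q = (\<Sum>i\<in>I - {k}. u i *\<^sub>R x i)"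
    unfolding q_def scaleR_sum_right using l1 by (intro sum.cong) auto
  also have "\<dots> = p - l *\<^sub>R x k" using u(3) sum.remove[OF fin k(1), of "\<lambda>i. u i *\<^sub>R x i"] l_def by simp
  finally have qe: "(1 - l) *\<^sub>R q = p - l *\<^sub>R x k" .
  have nq: "norm ((1 - l) *\<^sub>R q) = (1 - l) * norm q" using l1 by simp
  have "(1 - l)^2 * (norm q)^2 = (norm (p - l *\<^sub>R x k))^2"
    using nq qe by (simp add: power_mult_distrib)
  also have "\<dots> = r^2 - 2 * l * inner p (x k) + l^2 * (norm (x k))^2"
    unfolding r_def power2_norm_eq_inner by (simp add: inner_diff_left inner_diff_right inner_commute power2_eq_square algebra_simps)
  also have "\<dots> \<le> r^2 - 2 * l * r^2 + l^2"
  proof -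
    have "l^2 * (norm (x k))^2 \<le> l^2" using nx k(1) by (simp add: mult_left_le power_le_one)
    moreover have "2 * l * r^2 \<le> 2 * l * inner p (x k)" using ip l0 by (simp add: mult_left_mono)
    ultimately show ?thesis by linarith
  qed
  finally have qb: "(1 - l)^2 * (norm q)^2 \<le> r^2 - 2 * l * r^2 + l^2" .
  define d where "d = infdist 0 (convex hull (x ` (I - {k})))"
  have d0: "0 \<le> d" unfolding d_def by (rule infdist_nonneg)
  have dq: "d \<le> norm q" using infdist_le[OF qC, of 0] unfolding d_def by simp
  have dq2: "d^2 \<le> (norm q)^2" using dq d0 by (simp add: power_mono)
  have key: "(1 - 1 / (s - 1)^2) * (1 - l)^2 \<le> 1 - 2 * l"
  proof -
    have "l * (s - 1) \<le> 1 - l" using ls by (simp add: algebra_simps)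
    then have "(l * (s - 1))^2 \<le> (1 - l)^2" using l0 s2 by (intro power_mono) auto
    then have "l^2 * (s - 1)^2 \<le> (1 - l)^2" by (simp only: power_mult_distrib)
    moreover have "(s - 1)^2 > 0" using s2 by simp
    ultimately have "l^2 \<le> (1 - l)^2 / (s - 1)^2" by (simp add: pos_le_divide_eq)
    then show ?thesis by (simp add: algebra_simps power2_eq_square)
  qed
  have r2: "0 \<le> 1 - r^2" using r1 norm_ge_zero[of p] unfolding r_def by (simp add: power_le_one)
  have "(1 - 1 / (s - 1)^2) * (1 - r^2) * (1 - l)^2 \<le> (1 - 2 * l) * (1 - r^2)"
    using mult_right_mono[OF key r2] by (simp add: algebra_simps)
  also have "\<dots> = (1 - l)^2 - (r^2 - 2 * l * r^2 + l^2)" by (simp add: algebra_simps power2_eq_square)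
  also have "\<dots> \<le> (1 - l)^2 - (1 - l)^2 * d^2"
    using qb mult_left_mono[OF dq2, of "(1-l)^2"] by simp
  finally have "(1 - 1 / (s - 1)^2) * (1 - r^2) * (1 - l)^2 \<le> (1 - d^2) * (1 - l)^2"
    by (simp add: algebra_simps)
  then have "(1 - 1 / (s - 1)^2) * (1 - r^2) \<le> 1 - d^2"
    using l1 by (simp add: mult_le_cancel_right)
  then show ?thesis using k(1) p(2) unfolding s_def d_def r_def by auto
qed

lemma iter:
  fixes x :: "nat \<Rightarrow> 'a::real_inner"
  assumes j2: "2 \<le> j"
  shows "finite I \<Longrightarrow> card I = j + m \<Longrightarrow> \<forall>i\<in>I. norm (x i) \<le> 1 \<Longrightarrow>
    \<exists>J. J \<subseteq> I \<and> card J = j \<and>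
      (real (j + m) * (real j - 1) / ((real (j + m) - 1) * real j)) * (1 - (infdist 0 (convex hull (x ` I)))^2)
        \<le> 1 - (infdist 0 (convex hull (x ` J)))^2"
proof (induction m arbitrary: I)
  case 0
  have "real j * (real j - 1) / ((real j - 1) * real j) = 1" using j2 by simp
  then show ?case using 0 by (intro exI[of _ I]) simp
next
  case (Suc m)
  have c2: "card I \<ge> 2" using Suc.prems j2 by simp
  obtain k where k: "k \<in> I" and st: "(1 - 1 / (real (card I) - 1)^2) * (1 - (infdist 0 (convex hull (x ` I)))^2)
              \<le> 1 - (infdist 0 (convex hull (x ` (I - {k}))))^2"
    using step[OF Suc.prems(1) c2] Suc.prems(3) by blast
  have cI': "card (I - {k}) = j + m" using Suc.prems(2) k Suc.prems(1) by simp
  obtain J where J: "J \<subseteq> I - {k}" "card J = j"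
    "(real (j + m) * (real j - 1) / ((real (j + m) - 1) * real j)) * (1 - (infdist 0 (convex hull (x ` (I - {k}))))^2)
        \<le> 1 - (infdist 0 (convex hull (x ` J)))^2"
    using Suc.IH[of "I - {k}"] Suc.prems(1,3) cI' by auto
  define N where "N = real (j + m)"
  define c where "c = N * (real j - 1) / ((N - 1) * real j)"
  have N2: "N \<ge> 2" using j2 unfolding N_def by simp
  have c0: "0 \<le> c" unfolding c_def using N2 j2 by simp
  have cardI: "real (card I) = N + 1" using Suc.prems(2) unfolding N_def by simp
  have cid: "c * (1 - 1 / N^2) = (N + 1) * (real j - 1) / ((N + 1 - 1) * real j)"
    unfolding c_def using N2 j2 by (simp add: field_simps power2_eq_square)
  have "(N + 1) * (real j - 1) / ((N + 1 - 1) * real j) * (1 - (infdist 0 (convex hull (x ` I)))^2)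
      = c * ((1 - 1 / N^2) * (1 - (infdist 0 (convex hull (x ` I)))^2))"
    unfolding mult.assoc[symmetric] cid ..
  also have "\<dots> \<le> c * (1 - (infdist 0 (convex hull (x ` (I - {k}))))^2)"
    using st cardI c0 by (intro mult_left_mono) auto
  also have "\<dots> \<le> 1 - (infdist 0 (convex hull (x ` J)))^2" using J(3) unfolding c_def N_def .
  finally have X: "(N + 1) * (real j - 1) / ((N + 1 - 1) * real j) * (1 - (infdist 0 (convex hull (x ` I)))^2)
      \<le> 1 - (infdist 0 (convex hull (x ` J)))^2" .
  have e: "real (j + Suc m) = N + 1" unfolding N_def by simp
  show ?case unfolding e using J(1,2) X by blast
qed

theorem theorem5p2:
  fixes x :: "nat \<Rightarrow> 'a::{real_inner, complete_space}"
    and n j :: nat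
  assumes "n \<ge> 1"
    and "\<And>i. i \<in> {1..n+1} \<Longrightarrow> norm (x i) \<le> 1"
    and "0 \<in> convex hull (x ` {1..n+1})"
    and "1 \<le> j" and "j \<le> n"
  shows "\<exists>J. J \<subseteq> {1..n+1} \<and> card J = j \<and>
           infdist 0 (convex hull (x ` J)) \<le> sqrt ((real (n + 1) - real j) / (real n * real j))"
proof (cases "j = 1")
  case True
  have "infdist 0 (convex hull (x ` {1})) \<le> norm (x 1)"
    using infdist_le[of "x 1" "convex hull (x ` {1})" 0] by (simp add: hull_inc)
  also have "\<dots> \<le> 1" using assms(2)[of 1] by simp
  also have "1 = sqrt ((real (n + 1) - real j) / (real n * real j))" using True assms(1) by simp
  finally show ?thesis using True by (intro exI[of _ "{1}"]) auto
next
  case False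
  then have j2: "2 \<le> j" using assms(4) by simp
  have cI: "card {1..n+1} = j + (n + 1 - j)" using assms(5) by simp
  have d0: "infdist 0 (convex hull (x ` {1..n+1})) = 0" using assms(3) by (rule infdist_zero)
  obtain J where J: "J \<subseteq> {1..n+1}" "card J = j"
    "(real (j + (n+1-j)) * (real j - 1) / ((real (j + (n+1-j)) - 1) * real j)) * (1 - (infdist 0 (convex hull (x ` {1..n+1})))^2)
        \<le> 1 - (infdist 0 (convex hull (x ` J)))^2"
    using iter[OF j2, of "{1..n+1}" "n + 1 - j" x] cI assms(2) by auto
  define d where "d = infdist 0 (convex hull (x ` J))"
  have e: "real (j + (n+1-j)) = real n + 1" using assms(5) by simp
  have "(real n + 1) * (real j - 1) / (real n * real j) \<le> 1 - d^2"
    using J(3) d0 unfolding e d_def by simp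
  then have "d^2 \<le> 1 - (real n + 1) * (real j - 1) / (real n * real j)" by simp
  also have "\<dots> = (real (n + 1) - real j) / (real n * real j)"
    using assms(1) j2 by (simp add: field_simps)
  finally have "d \<le> sqrt ((real (n + 1) - real j) / (real n * real j))" by (rule real_le_rsqrt)
  then show ?thesis using J(1,2) unfolding d_def by blast
qed

end
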